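(* Let $T$ be a bounded subset of $\mathbb R^p$. Let $\mathbf B$ be an $n\times q$ random matrix with i.i.d. $\mathcal N(0,1)$ entries and let $\mathbf A=\mathbf B\mathbf C$, where $\mathbf C$ is a deterministic $q\times p$ matrix. Fix $\varepsilon\ge0$ and let $T_\varepsilon:=\{\mathbf u\in T:\ \frac1n\|\mathbf A\mathbf u\|_1\le\varepsilon\}$. Then $$\mathbb E\sup_{\mathbf u\in T_\varepsilon}\left(\mathbf u^T\mathbf C^T\mathbf C\mathbf u\right)^{1/2}\le\sqrt{\frac{2\pi}{n}}\ \mathbb E\sup_{\mathbf u\in T}|\langle\mathbf C^T\mathbf g,\mathbf u\rangle|+\sqrt{\frac\pi2}\,\varepsilon,$$ where $\mathbf g\sim\mathcal N(0,\mathbf I_q)$ is a standard Gaussian random vector in $\mathbb R^q$. *)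

theory Defs
  imports "HOL-Probability.Probability"
begin

definition l1norm :: "real ^ 'n \<Rightarrow> real" where
  "l1norm x = (\<Sum>i\<in>UNIV. \<bar>x $ i\<bar>)"

end

theory Submission
  imports Defs
begin


definition stdN :: "real measure" where "stdN = density lborel std_normal_density"

lemma prob_space_stdN[simp, intro]: "prob_space stdN"
  unfolding stdN_def by (rule prob_space_normal_density) simp

lemma sets_stdN[simp]: "sets stdN = sets borel"
  unfolding stdN_def by simp

lemma space_stdN[simp]: "space stdN = UNIV"
  unfolding stdN_def by simp

lemma measurable_stdN1[simp]: "measurable stdN N = measurable borel N"
  by (rule measurable_cong_sets) simp_all
lemma measurable_stdN2[simp]: "measurable N stdN = measurable N borel"
  by (rule measurable_cong_sets) simp_all



lemma prob_space_GP[simp, intro]: "prob_space (PiM I (\<lambda>_. stdN))"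
  by (intro prob_space_PiM) simp

lemma distributed_stdN:
  assumes "distributed M lborel X std_normal_density"
  shows "distr M stdN X = stdN"
proof -
  have "distr M stdN X = distr M lborel X" by (rule distr_cong) auto
  also have "\<dots> = stdN" using assms unfolding distributed_def stdN_def by simp
  finally show ?thesis .
qed

lemma distributed_stdN_iff:
  assumes "X \<in> measurable M borel"
  shows "distributed M lborel X std_normal_density \<longleftrightarrow> distr M stdN X = stdN"
proof
  assume "distr M stdN X = stdN"
  moreover have "distr M stdN X = distr M lborel X" by (rule distr_cong) auto
  ultimately show "distributed M lborel X std_normal_density"
    using assms unfolding distributed_def stdN_def by simp
qed (rule distributed_stdN)

lemma std_family:
  assumes "prob_space M" and ind: "prob_space.indep_vars M (\<lambda>_. borel) X UNIV"
    and d: "\<And>i. distributed M lborel (X i) std_normal_density"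
  shows "distr M (PiM UNIV (\<lambda>_. stdN)) (\<lambda>x i. X i x) = PiM UNIV (\<lambda>_. stdN)"
proof -
  interpret prob_space M by fact
  have rv: "\<And>i. random_variable borel (X i)"
    using d unfolding distributed_def by simp
  have "distr M (PiM UNIV (\<lambda>_. borel)) (\<lambda>x. \<lambda>i\<in>UNIV. X i x) = PiM UNIV (\<lambda>i. distr M borel (X i))"
    using indep_vars_iff_distr_eq_PiM[where I=UNIV and M'="\<lambda>_. borel" and X=X] rv ind by simp
  moreover have "distr M (PiM UNIV (\<lambda>_. stdN)) (\<lambda>x i. X i x) = distr M (PiM UNIV (\<lambda>_. borel)) (\<lambda>x. \<lambda>i\<in>UNIV. X i x)"
    by (rule distr_cong) (auto intro!: sets_PiM_cong)
  moreover have "PiM UNIV (\<lambda>i. distr M borel (X i)) = PiM UNIV (\<lambda>_. stdN)"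
  proof (rule PiM_cong)
    fix i :: 'b
    have "distr M borel (X i) = distr M stdN (X i)" by (rule distr_cong) auto
    then show "distr M borel (X i) = stdN" using distributed_stdN[OF d] by simp
  qed simp
  ultimately show ?thesis by simp
qed

lemma GP_coords:
  shows "prob_space.indep_vars (PiM I (\<lambda>_. stdN)) (\<lambda>_. borel) (\<lambda>i w. w i) I"
    and "i \<in> I \<Longrightarrow> distributed (PiM I (\<lambda>_. stdN)) lborel (\<lambda>w. w i) std_normal_density"
proof -
  interpret P: prob_space "PiM I (\<lambda>_. stdN)" by simp
  show "i \<in> I \<Longrightarrow> distributed (PiM I (\<lambda>_. stdN)) lborel (\<lambda>w. w i) std_normal_density"
  proof -
    assume i: "i \<in> I"
    have "(\<lambda>w. w i) \<in> measurable (PiM I (\<lambda>_. stdN)) stdN" by (rule measurable_component_singleton) fact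
    then have m: "(\<lambda>w. w i) \<in> measurable (PiM I (\<lambda>_. stdN)) borel"
      by (simp add: measurable_cong_sets[OF refl sets_stdN])
    show ?thesis
      by (subst distributed_stdN_iff[OF m]) (rule distr_PiM_component[OF _ i], simp)
  qed
  show "P.indep_vars (\<lambda>_. borel) (\<lambda>i w. w i) I"
  proof (cases "I = {}")
    case True then show ?thesis unfolding P.indep_vars_def P.indep_sets_def by auto
  next
    case False
    have "distr (PiM I (\<lambda>_. stdN)) (PiM I (\<lambda>_. borel)) (\<lambda>x. \<lambda>i\<in>I. x i) = PiM I (\<lambda>_. stdN)"
    proof -
      have "distr (PiM I (\<lambda>_. stdN)) (PiM I (\<lambda>_. borel)) (\<lambda>x. \<lambda>i\<in>I. x i)
          = distr (PiM I (\<lambda>_. stdN)) (PiM I (\<lambda>_. stdN)) (\<lambda>x. x)"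
        by (rule distr_cong) (auto intro!: sets_PiM_cong simp: space_PiM PiE_def extensional_def restrict_def fun_eq_iff)
      then show ?thesis by simp
    qed
    moreover have "PiM I (\<lambda>i. distr (PiM I (\<lambda>_. stdN)) borel (\<lambda>x. x i)) = PiM I (\<lambda>_. stdN)"
    proof (rule PiM_cong)
      fix i assume "i \<in> I"
      have "distr (PiM I (\<lambda>_. stdN)) borel (\<lambda>x. x i) = distr (PiM I (\<lambda>_. stdN)) stdN (\<lambda>x. x i)"
        by (rule distr_cong) auto
      then show "distr (PiM I (\<lambda>_. stdN)) borel (\<lambda>x. x i) = stdN" using distr_PiM_component[of I "\<lambda>_. stdN" i] \<open>i\<in>I\<close> by simp
    qed simp
    moreover have "(\<lambda>w. w i) \<in> measurable (PiM I (\<lambda>_. stdN)) borel" for i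
    proof (cases "i \<in> I")
      case True
      have "(\<lambda>w. w i) \<in> measurable (PiM I (\<lambda>_. stdN)) stdN" by (rule measurable_component_singleton) fact
      then show ?thesis by (simp add: measurable_cong_sets[OF refl sets_stdN])
    next
      case False
      have "(\<lambda>w. w i) \<in> measurable (PiM I (\<lambda>_. stdN)) borel \<longleftrightarrow> (\<lambda>w. undefined::real) \<in> measurable (PiM I (\<lambda>_. stdN)) borel"
        by (rule measurable_cong) (use False in \<open>auto simp: space_PiM PiE_def extensional_def\<close>)
      then show ?thesis by simp
    qed
    ultimately show ?thesis
      using P.indep_vars_iff_distr_eq_PiM[where I=I and M'="\<lambda>_. borel" and X="\<lambda>i w. w i"] False by simp
  qed
qed

lemma (in prob_space) abs_normal_expect:
  assumes Z: "distributed M lborel Z (normal_density 0 \<sigma>)" and s: "0 < \<sigma>"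
  shows "integrable M (\<lambda>x. \<bar>Z x\<bar>)" "(\<integral>x. \<bar>Z x\<bar> \<partial>M) = \<sigma> * sqrt (2 / pi)"
proof -
  have D: "distributed M lborel (\<lambda>x. (Z x - 0) / \<sigma>) std_normal_density"
    using Z normal_standard_normal_convert[OF s, of Z 0] by simp
  have mom: "(\<integral>x. std_normal_density x * \<bar>x\<bar> \<partial>lborel) = sqrt (2 / pi)"
    using integral_std_normal_moment_abs_odd[of 0] by simp
  have "(\<integral>x. std_normal_density x * \<bar>x\<bar> \<partial>lborel) = (\<integral>x. \<bar>(Z x - 0) / \<sigma>\<bar> \<partial>M)"
    by (rule distributed_integral[OF D]) auto
  also have "\<dots> = (\<integral>x. \<bar>Z x\<bar> \<partial>M) / \<sigma>"
    using s by (simp add: abs_div)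
  finally have *: "(\<integral>x. \<bar>Z x\<bar> \<partial>M) / \<sigma> = sqrt (2 / pi)" using mom by simp
  then show "(\<integral>x. \<bar>Z x\<bar> \<partial>M) = \<sigma> * sqrt (2 / pi)" using s by (simp add: field_simps)
  have "integrable lborel (\<lambda>x. std_normal_density x * \<bar>x\<bar>)"
    using integrable_std_normal_moment_abs[of 1] by simp
  then have "integrable M (\<lambda>x. \<bar>(Z x - 0) / \<sigma>\<bar>)"
    by (subst distributed_integrable[OF D, symmetric]) auto
  then have "integrable M (\<lambda>x. \<sigma> * \<bar>(Z x - 0) / \<sigma>\<bar>)" by (rule integrable_mult_right)
  then show "integrable M (\<lambda>x. \<bar>Z x\<bar>)" using s by (simp add: abs_div)
qed

lemma GP_abs_lincomb:
  fixes k :: "'q::finite \<Rightarrow> 'i" and a :: "'q \<Rightarrow> real"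
  assumes k: "inj k" "range k \<subseteq> I"
  shows "integrable (PiM I (\<lambda>_. stdN)) (\<lambda>w. \<bar>\<Sum>j\<in>UNIV. a j * w (k j)\<bar>)"
    and "(\<integral>w. \<bar>\<Sum>j\<in>UNIV. a j * w (k j)\<bar> \<partial>PiM I (\<lambda>_. stdN)) = sqrt (\<Sum>j\<in>UNIV. (a j)^2) * sqrt (2/pi)"
proof -
  interpret P: prob_space "PiM I (\<lambda>_. stdN)" by simp
  have "integrable (PiM I (\<lambda>_. stdN)) (\<lambda>w. \<bar>\<Sum>j\<in>UNIV. a j * w (k j)\<bar>) \<and>
    (\<integral>w. \<bar>\<Sum>j\<in>UNIV. a j * w (k j)\<bar> \<partial>PiM I (\<lambda>_. stdN)) = sqrt (\<Sum>j\<in>UNIV. (a j)^2) * sqrt (2/pi)"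
  proof (cases "\<forall>j. a j = 0")
    case True then show ?thesis by simp
  next
    case False
    define J where "J = {j. a j \<noteq> 0}"
    have J: "J \<noteq> {}" using False by (auto simp: J_def)
    define L where "L = k ` J"
    have L: "L \<noteq> {}" "finite L" "L \<subseteq> I" using J k by (auto simp: L_def)
    define c where "c = (\<lambda>i. a (inv k i))"
    have ck: "c (k j) = a j" for j using k by (simp add: c_def)
    have sumeq: "(\<Sum>j\<in>UNIV. a j * w (k j)) = (\<Sum>i\<in>L. c i * w i)" for w
    proof -
      have "(\<Sum>j\<in>UNIV. a j * w (k j)) = (\<Sum>j\<in>J. a j * w (k j))"
        by (rule sum.mono_neutral_right) (auto simp: J_def)
      also have "\<dots> = (\<Sum>i\<in>L. c i * w i)"
        unfolding L_def using k by (subst sum.reindex) (auto simp: ck intro: inj_on_subset)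
      finally show ?thesis .
    qed
    have sqeq: "(\<Sum>i\<in>L. (\<bar>c i\<bar> * 1)\<^sup>2) = (\<Sum>j\<in>UNIV. (a j)^2)"
    proof -
      have "(\<Sum>j\<in>UNIV. (a j)^2) = (\<Sum>j\<in>J. (a j)^2)"
        by (rule sum.mono_neutral_right) (auto simp: J_def)
      also have "\<dots> = (\<Sum>i\<in>L. (\<bar>c i\<bar> * 1)\<^sup>2)"
        unfolding L_def using k by (subst sum.reindex) (auto simp: ck intro: inj_on_subset)
      finally show ?thesis by simp
    qed
    have cnz: "i \<in> L \<Longrightarrow> c i \<noteq> 0" for i by (auto simp: L_def J_def ck)
    have ind: "P.indep_vars (\<lambda>_. borel) (\<lambda>i w. c i * w i) L"
      by (rule P.indep_vars_compose2[OF P.indep_vars_subset[OF GP_coords(1) L(3)]]) auto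
    have dist: "distributed (PiM I (\<lambda>_. stdN)) lborel (\<lambda>w. c i * w i) (normal_density 0 (\<bar>c i\<bar> * 1))" if "i \<in> L" for i
      using P.normal_density_affine[OF GP_coords(2)[where i=i and I=I], where \<alpha>="c i" and \<beta>=0] that L cnz by auto
    have "distributed (PiM I (\<lambda>_. stdN)) lborel (\<lambda>w. \<Sum>i\<in>L. c i * w i)
         (normal_density (\<Sum>i\<in>L. 0) (sqrt (\<Sum>i\<in>L. (\<bar>c i\<bar> * 1)\<^sup>2)))"
      by (rule P.sum_indep_normal[OF L(2) L(1) ind]) (use cnz dist in auto)
    then have D: "distributed (PiM I (\<lambda>_. stdN)) lborel (\<lambda>w. \<Sum>i\<in>L. c i * w i)
         (normal_density 0 (sqrt (\<Sum>j\<in>UNIV. (a j)^2)))" using sqeq by simp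
    have pos: "0 < sqrt (\<Sum>j\<in>UNIV. (a j)^2)"
    proof -
      obtain j where j: "a j \<noteq> 0" using False by auto
      have "(a j)^2 \<le> (\<Sum>j\<in>UNIV. (a j)^2)" by (rule member_le_sum) auto
      moreover have "0 < (a j)^2" using j by simp
      ultimately have "0 < (\<Sum>j\<in>UNIV. (a j)^2)" by linarith
      then show ?thesis by simp
    qed
    show ?thesis
      using P.abs_normal_expect[OF D pos] by (simp add: sumeq)
  qed
  then show "integrable (PiM I (\<lambda>_. stdN)) (\<lambda>w. \<bar>\<Sum>j\<in>UNIV. a j * w (k j)\<bar>)"
    and "(\<integral>w. \<bar>\<Sum>j\<in>UNIV. a j * w (k j)\<bar> \<partial>PiM I (\<lambda>_. stdN)) = sqrt (\<Sum>j\<in>UNIV. (a j)^2) * sqrt (2/pi)"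
    by auto
qed



definition sg :: "bool \<Rightarrow> real" where "sg b = (if b then -1 else 1)"

lemma contraction_step:
  fixes R t :: "'v \<Rightarrow> real"
  assumes F: "finite F" "F \<noteq> {}"
  shows "Max ((\<lambda>v. R v + \<bar>t v\<bar>) ` F) + Max ((\<lambda>v. R v - \<bar>t v\<bar>) ` F)
      \<le> Max ((\<lambda>v. R v + t v) ` F) + Max ((\<lambda>v. R v - t v) ` F)"
proof -
  obtain v1 where v1: "v1 \<in> F" "Max ((\<lambda>v. R v + \<bar>t v\<bar>) ` F) = R v1 + \<bar>t v1\<bar>"
  proof -
    have "Max ((\<lambda>v. R v + \<bar>t v\<bar>) ` F) \<in> (\<lambda>v. R v + \<bar>t v\<bar>) ` F" using F by (intro Max_in) auto
    then show ?thesis using that by auto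
  qed
  obtain v2 where v2: "v2 \<in> F" "Max ((\<lambda>v. R v - \<bar>t v\<bar>) ` F) = R v2 - \<bar>t v2\<bar>"
  proof -
    have "Max ((\<lambda>v. R v - \<bar>t v\<bar>) ` F) \<in> (\<lambda>v. R v - \<bar>t v\<bar>) ` F" using F by (intro Max_in) auto
    then show ?thesis using that by auto
  qed
  have a1: "R v1 + t v1 \<le> Max ((\<lambda>v. R v + t v) ` F)" "R v2 + t v2 \<le> Max ((\<lambda>v. R v + t v) ` F)"
    using v1 v2 F by (auto intro!: Max_ge)
  have a2: "R v1 - t v1 \<le> Max ((\<lambda>v. R v - t v) ` F)" "R v2 - t v2 \<le> Max ((\<lambda>v. R v - t v) ` F)"
    using v1 v2 F by (auto intro!: Max_ge)
  have "\<bar>t v1\<bar> - \<bar>t v2\<bar> \<le> t v1 - t v2 \<or> \<bar>t v1\<bar> - \<bar>t v2\<bar> \<le> t v2 - t v1" by linarith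
  then show ?thesis using v1 v2 a1 a2 by linarith
qed

lemma sum_bool_fun_split:
  fixes H :: "('n::finite \<Rightarrow> bool) \<Rightarrow> real"
  shows "(\<Sum>s\<in>UNIV. H s) = (\<Sum>s\<in>UNIV. H (s(i0 := True)) + H (s(i0 := False))) / 2"
proof -
  define fl where "fl s = s(i0 := \<not> s i0)" for s :: "'n \<Rightarrow> bool"
  have fl: "fl (fl s) = s" for s by (auto simp: fl_def fun_eq_iff)
  have "(\<Sum>s\<in>UNIV. H s) = (\<Sum>s\<in>UNIV. H (fl s))"
    by (rule sum.reindex_bij_witness[of _ fl fl]) (auto simp: fl)
  then have "2 * (\<Sum>s\<in>UNIV. H s) = (\<Sum>s\<in>UNIV. H s + H (fl s))"
    by (simp add: sum.distrib)
  also have "\<dots> = (\<Sum>s\<in>UNIV. H (s(i0 := True)) + H (s(i0 := False)))"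
  proof (rule sum.cong[OF refl])
    fix s
    show "H s + H (fl s) = H (s(i0 := True)) + H (s(i0 := False))"
    proof (cases "s i0")
      case True
      then have "s(i0 := True) = s" "fl s = s(i0 := False)" by (auto simp: fl_def fun_eq_iff)
      then show ?thesis by simp
    next
      case False
      then have "s(i0 := False) = s" "fl s = s(i0 := True)" by (auto simp: fl_def fun_eq_iff)
      then show ?thesis by simp
    qed
  qed
  finally show ?thesis by simp
qed

lemma contraction_gen:
  fixes a :: "'n::finite \<Rightarrow> 'v \<Rightarrow> real"
  assumes F: "finite F" "F \<noteq> {}"
  shows "(\<Sum>s\<in>UNIV. Max ((\<lambda>v. \<Sum>i\<in>UNIV. sg (s i) * (if i \<in> A then \<bar>a i v\<bar> else a i v)) ` F))
       \<le> (\<Sum>s\<in>UNIV. Max ((\<lambda>v. \<Sum>i\<in>UNIV. sg (s i) * a i v) ` F))"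
proof -
  have "finite A" by simp
  then show ?thesis
  proof (induction A rule: finite_induct)
    case empty then show ?case by simp
  next
    case (insert i0 A)
    define phi where "phi B i v = (if i \<in> B then \<bar>a i v\<bar> else a i v)" for B i v
    define G where "G B s = Max ((\<lambda>v. \<Sum>i\<in>UNIV. sg (s i) * phi B i v) ` F)" for B s
    define R where "R s v = (\<Sum>i\<in>UNIV - {i0}. sg (s i) * phi A i v)" for s v
    have split: "(\<Sum>i\<in>UNIV. sg ((s(i0 := b)) i) * phi B i v) = sg b * phi B i0 v + R s v"
      if "B = A \<or> B = insert i0 A" for s b B v
    proof -
      have "(\<Sum>i\<in>UNIV. sg ((s(i0 := b)) i) * phi B i v) = sg b * phi B i0 v + (\<Sum>i\<in>UNIV - {i0}. sg ((s(i0 := b)) i) * phi B i v)"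
        by (subst sum.remove[of _ i0]) auto
      also have "(\<Sum>i\<in>UNIV - {i0}. sg ((s(i0 := b)) i) * phi B i v) = R s v"
        unfolding R_def using that by (intro sum.cong) (auto simp: phi_def)
      finally show ?thesis .
    qed
    have step: "G (insert i0 A) (s(i0 := True)) + G (insert i0 A) (s(i0 := False))
        \<le> G A (s(i0 := True)) + G A (s(i0 := False))" for s
    proof -
      have e1: "G (insert i0 A) (s(i0 := False)) = Max ((\<lambda>v. R s v + \<bar>a i0 v\<bar>) ` F)"
        unfolding G_def using split[of "insert i0 A" s False] by (simp add: phi_def sg_def add.commute)
      have e2: "G (insert i0 A) (s(i0 := True)) = Max ((\<lambda>v. R s v - \<bar>a i0 v\<bar>) ` F)"
        unfolding G_def using split[of "insert i0 A" s True] by (simp add: phi_def sg_def)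
      have e3: "G A (s(i0 := False)) = Max ((\<lambda>v. R s v + a i0 v) ` F)"
        unfolding G_def using split[of A s False] insert.hyps by (simp add: phi_def sg_def add.commute)
      have e4: "G A (s(i0 := True)) = Max ((\<lambda>v. R s v - a i0 v) ` F)"
        unfolding G_def using split[of A s True] insert.hyps by (simp add: phi_def sg_def)
      show ?thesis using contraction_step[OF F, of "R s" "a i0"] e1 e2 e3 e4 by linarith
    qed
    have "(\<Sum>s\<in>UNIV. G (insert i0 A) s) \<le> (\<Sum>s\<in>UNIV. G A s)"
      using sum_bool_fun_split[of "G (insert i0 A)" i0] sum_bool_fun_split[of "G A" i0]
        sum_mono[of UNIV "\<lambda>s. G (insert i0 A) (s(i0 := True)) + G (insert i0 A) (s(i0 := False))"
          "\<lambda>s. G A (s(i0 := True)) + G A (s(i0 := False))"] step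
      by simp
    then show ?case using insert.IH unfolding G_def phi_def by linarith
  qed
qed

lemma contraction:
  fixes a :: "'n::finite \<Rightarrow> 'v \<Rightarrow> real"
  assumes F: "finite F" "F \<noteq> {}"
  shows "(\<Sum>s\<in>UNIV. Max ((\<lambda>v. \<Sum>i\<in>UNIV. sg (s i) * \<bar>a i v\<bar>) ` F))
       \<le> (\<Sum>s\<in>UNIV. Max ((\<lambda>v. \<Sum>i\<in>UNIV. sg (s i) * a i v) ` F))"
  using contraction_gen[OF F, of UNIV a] by simp



lemma GP_measurable_coord[measurable]:
  "(\<lambda>w. w k) \<in> borel_measurable (PiM UNIV (\<lambda>_. stdN))"
proof -
  have "(\<lambda>w. w k) \<in> measurable (PiM UNIV (\<lambda>_. stdN)) stdN" by (rule measurable_component_singleton) simp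
  then show ?thesis by (simp add: measurable_cong_sets[OF refl sets_stdN])
qed

lemma GP_integrable_coord[simp, intro]:
  "integrable (PiM UNIV (\<lambda>_. stdN)) (\<lambda>w. w k)"
proof -
  have "integrable lborel (\<lambda>x. std_normal_density x * x)"
    using integrable_std_normal_moment[of 1] by simp
  then show ?thesis
    using distributed_integrable[OF GP_coords(2)[where i=k and I=UNIV], of "\<lambda>x. x"] by simp
qed

lemma GP_reindex:
  fixes f :: "'i \<Rightarrow> 'i" and h :: "('i \<Rightarrow> real) \<Rightarrow> real"
  assumes "inj f" and h: "h \<in> borel_measurable (PiM UNIV (\<lambda>_::'i. stdN))"
  shows "(\<integral>w. h w \<partial>PiM UNIV (\<lambda>_. stdN)) = (\<integral>w. h (\<lambda>k. w (f k)) \<partial>PiM UNIV (\<lambda>_. stdN))"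
proof -
  let ?P = "PiM UNIV (\<lambda>_::'i. stdN)"
  have D: "distr ?P ?P (\<lambda>\<omega>. \<lambda>n\<in>UNIV. \<omega> (f n)) = ?P"
    using distr_PiM_reindex[of UNIV "\<lambda>_. stdN" f UNIV] assms by simp
  have T: "(\<lambda>\<omega>. \<lambda>n\<in>UNIV. \<omega> (f n)) \<in> measurable ?P ?P"
    by (intro measurable_restrict measurable_component_singleton) simp
  have "(\<integral>w. h w \<partial>?P) = (\<integral>w. h w \<partial>distr ?P ?P (\<lambda>\<omega>. \<lambda>n\<in>UNIV. \<omega> (f n)))" using D by simp
  also have "\<dots> = (\<integral>w. h (\<lambda>n\<in>UNIV. w (f n)) \<partial>?P)"
    by (rule integral_distr[OF T h])
  finally show ?thesis by (simp add: restrict_def)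
qed

lemma GP_signflip:
  fixes \<sigma> :: "'i \<Rightarrow> real" and h :: "('i \<Rightarrow> real) \<Rightarrow> real"
  assumes s: "\<And>k. \<sigma> k = 1 \<or> \<sigma> k = -1" and h: "h \<in> borel_measurable (PiM UNIV (\<lambda>_::'i. stdN))"
  shows "(\<integral>w. h w \<partial>PiM UNIV (\<lambda>_. stdN)) = (\<integral>w. h (\<lambda>k. \<sigma> k * w k) \<partial>PiM UNIV (\<lambda>_. stdN))"
proof -
  let ?P = "PiM UNIV (\<lambda>_::'i. stdN)"
  interpret P: prob_space ?P by simp
  have ind: "P.indep_vars (\<lambda>_. borel) (\<lambda>k w. \<sigma> k * w k) UNIV"
    by (rule P.indep_vars_compose2[OF GP_coords(1)]) auto
  have nz: "\<sigma> k \<noteq> 0" for k using s[of k] by auto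
  have ab: "\<bar>\<sigma> k\<bar> = 1" for k using s[of k] by auto
  have dist: "distributed ?P lborel (\<lambda>w. \<sigma> k * w k) std_normal_density" for k
    using P.normal_density_affine[OF GP_coords(2)[where i=k and I=UNIV], where \<alpha>="\<sigma> k" and \<beta>=0] nz ab by simp
  have D: "distr ?P ?P (\<lambda>x k. \<sigma> k * x k) = ?P"
    using std_family[OF _ ind dist] by simp
  have T: "(\<lambda>x k. \<sigma> k * x k) \<in> measurable ?P ?P"
    using ind unfolding P.indep_vars_def
    by (intro measurable_PiM_single') (auto simp: measurable_cong_sets[OF refl sets_stdN] space_PiM)
  have "(\<integral>w. h w \<partial>?P) = (\<integral>w. h w \<partial>distr ?P ?P (\<lambda>x k. \<sigma> k * x k))" using D by simp
  also have "\<dots> = (\<integral>w. h (\<lambda>k. \<sigma> k * w k) \<partial>?P)"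
    by (rule integral_distr[OF T h])
  finally show ?thesis .
qed

lemma GP_rowsum:
  fixes h :: "('q::finite \<Rightarrow> real) \<Rightarrow> real"
  assumes h: "h \<in> borel_measurable (PiM UNIV (\<lambda>_::'q. stdN))"
  shows "(\<integral>w. h (\<lambda>j. (1 / sqrt (real CARD('n))) * (\<Sum>i\<in>UNIV. w ((i,j),False)))
            \<partial>PiM UNIV (\<lambda>_::(('n::finite \<times> 'q) \<times> bool). stdN))
       = (\<integral>z. h z \<partial>PiM UNIV (\<lambda>_. stdN))"
proof -
  let ?P = "PiM UNIV (\<lambda>_::(('n \<times> 'q) \<times> bool). stdN)"
  let ?Q = "PiM UNIV (\<lambda>_::'q. stdN)"
  let ?c = "1 / sqrt (real CARD('n))"
  interpret P: prob_space ?P by simp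
  define K where "K j = range (\<lambda>i::'n. ((i,j),False))" for j :: 'q
  define X where "X j w = ?c * (\<Sum>i\<in>UNIV. w ((i,j),False))" for j :: 'q and w :: "('n \<times> 'q) \<times> bool \<Rightarrow> real"
  have injK: "inj (\<lambda>i::'n. ((i,j),False))" for j by (auto simp: inj_def)
  have sumK: "(\<Sum>k\<in>K j. w k) = (\<Sum>i\<in>UNIV. w ((i,j),False))" for j w
    unfolding K_def by (subst sum.reindex[OF injK]) auto
  have ind0: "P.indep_vars (\<lambda>j. PiM (K j) (\<lambda>_. borel)) (\<lambda>j \<omega>. restrict (\<lambda>i. \<omega> i) (K j)) UNIV"
    by (rule P.indep_vars_restrict[OF GP_coords(1)]) (auto simp: K_def disjoint_family_on_def)
  have ind1: "P.indep_vars (\<lambda>_. borel) (\<lambda>j \<omega>. ?c * (\<Sum>k\<in>K j. (restrict (\<lambda>i. \<omega> i) (K j)) k)) UNIV"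
    by (rule P.indep_vars_compose2[OF ind0]) auto
  have ind: "P.indep_vars (\<lambda>_. borel) X UNIV"
    using ind1 by (subst P.indep_vars_cong[of UNIV UNIV X _ "\<lambda>_. borel" "\<lambda>_. borel"]) (auto simp: X_def sumK fun_eq_iff)
  have dist: "distributed ?P lborel (X j) std_normal_density" for j
  proof -
    have fin: "finite (K j)" "K j \<noteq> {}" by (auto simp: K_def)
    have SD: "distributed ?P lborel (\<lambda>w. \<Sum>k\<in>K j. w k) (normal_density (\<Sum>k\<in>K j. 0) (sqrt (\<Sum>k\<in>K j. 1\<^sup>2)))"
      by (rule P.sum_indep_normal[OF fin(1) fin(2) P.indep_vars_subset[OF GP_coords(1)]])
         (auto intro: GP_coords(2))
    have "distributed ?P lborel (\<lambda>w. \<Sum>i\<in>UNIV. w ((i,j),False)) (normal_density 0 (sqrt (real CARD('n))))"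
    proof -
      have cK: "(\<Sum>k\<in>K j. (1::real)\<^sup>2) = real CARD('n)"
        using card_image[OF injK[of j]] by (simp add: K_def)
      have "distributed ?P lborel (\<lambda>w. \<Sum>k\<in>K j. w k) (normal_density 0 (sqrt (real CARD('n))))"
        using SD cK by simp
      then show ?thesis by (simp only: sumK)
    qed
    from P.normal_density_affine[OF this, where \<alpha>="?c" and \<beta>=0]
    show ?thesis by (simp add: X_def[abs_def])
  qed
  have D: "distr ?P ?Q (\<lambda>x j. X j x) = ?Q"
    using std_family[OF _ ind dist] by simp
  have T: "(\<lambda>x j. X j x) \<in> measurable ?P ?Q"
    using ind unfolding P.indep_vars_def
    by (intro measurable_PiM_single') (auto simp: measurable_cong_sets[OF refl sets_stdN] space_PiM)
  have "(\<integral>z. h z \<partial>?Q) = (\<integral>z. h z \<partial>distr ?P ?Q (\<lambda>x j. X j x))" using D by simp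
  also have "\<dots> = (\<integral>w. h (\<lambda>j. X j w) \<partial>?P)"
    by (rule integral_distr[OF T h])
  finally show ?thesis by (simp add: X_def)
qed

lemma GP_fold_ineq:
  fixes f :: "('i \<Rightarrow> real) \<Rightarrow> real" and A :: "('i \<Rightarrow> real) \<Rightarrow> real"
  assumes IJ: "I \<inter> J = {}" "finite I" "finite J"
    and f: "integrable (PiM (I \<union> J) (\<lambda>_. stdN)) f"
    and A: "integrable (PiM I (\<lambda>_. stdN)) A"
    and le: "\<And>x. x \<in> space (PiM I (\<lambda>_. stdN)) \<Longrightarrow> A x \<le> (\<integral>y. f (merge I J (x,y)) \<partial>PiM J (\<lambda>_. stdN))"
  shows "(\<integral>x. A x \<partial>PiM I (\<lambda>_. stdN)) \<le> (\<integral>w. f w \<partial>PiM (I \<union> J) (\<lambda>_. stdN))"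
proof -
  interpret PS: product_sigma_finite "\<lambda>_::'i. stdN"
    by (simp add: product_sigma_finite_def prob_space_imp_sigma_finite)
  interpret PP: pair_sigma_finite "PiM I (\<lambda>_. stdN)" "PiM J (\<lambda>_. stdN)"
    by (simp add: pair_sigma_finite_def prob_space_imp_sigma_finite)
  have fi: "integrable (PiM I (\<lambda>_. stdN) \<Otimes>\<^sub>M PiM J (\<lambda>_. stdN)) (\<lambda>p. f (merge I J p))"
    by (rule integrable_distr[OF measurable_merge]) (simp add: PS.distr_merge[OF IJ] f)
  have "(\<integral>x. A x \<partial>PiM I (\<lambda>_. stdN)) \<le> (\<integral>x. (\<integral>y. f (merge I J (x,y)) \<partial>PiM J (\<lambda>_. stdN)) \<partial>PiM I (\<lambda>_. stdN))"
    by (rule integral_mono[OF A PP.integrable_fst'[OF fi]]) (rule le)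
  also have "\<dots> = (\<integral>w. f w \<partial>PiM (I \<union> J) (\<lambda>_. stdN))"
    by (rule PS.product_integral_fold[OF IJ f, symmetric])
  finally show ?thesis .
qed



lemma integrable_Max_fun:
  fixes f :: "'v \<Rightarrow> 'a \<Rightarrow> real"
  assumes "finite F" "F \<noteq> {}" "\<And>v. v \<in> F \<Longrightarrow> integrable M (f v)"
  shows "integrable M (\<lambda>x. Max ((\<lambda>v. f v x) ` F))"
  using assms
proof (induction F rule: finite_ne_induct)
  case (singleton v) then show ?case by simp
next
  case (insert v F)
  have "(\<lambda>x. Max ((\<lambda>v. f v x) ` insert v F)) = (\<lambda>x. max (f v x) (Max ((\<lambda>v. f v x) ` F)))"
    using insert by (auto simp: fun_eq_iff)
  then show ?case using insert by simp
qed

lemma GP_fold_ineq2: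
  fixes f g :: "('i \<Rightarrow> real) \<Rightarrow> real"
  assumes IJ: "I \<inter> J = {}" "finite I" "finite J"
    and f: "integrable (PiM (I \<union> J) (\<lambda>_. stdN)) f"
    and g: "integrable (PiM (I \<union> J) (\<lambda>_. stdN)) g"
    and le: "\<And>x. x \<in> space (PiM I (\<lambda>_. stdN)) \<Longrightarrow>
       (\<integral>y. g (merge I J (x,y)) \<partial>PiM J (\<lambda>_. stdN)) \<le> (\<integral>y. f (merge I J (x,y)) \<partial>PiM J (\<lambda>_. stdN))"
  shows "(\<integral>w. g w \<partial>PiM (I \<union> J) (\<lambda>_. stdN)) \<le> (\<integral>w. f w \<partial>PiM (I \<union> J) (\<lambda>_. stdN))"
proof -
  interpret PS: product_sigma_finite "\<lambda>_::'i. stdN"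
    by (simp add: product_sigma_finite_def prob_space_imp_sigma_finite)
  interpret PP: pair_sigma_finite "PiM I (\<lambda>_. stdN)" "PiM J (\<lambda>_. stdN)"
    by (simp add: pair_sigma_finite_def prob_space_imp_sigma_finite)
  have fi: "integrable (PiM I (\<lambda>_. stdN) \<Otimes>\<^sub>M PiM J (\<lambda>_. stdN)) (\<lambda>p. f (merge I J p))"
    by (rule integrable_distr[OF measurable_merge]) (simp add: PS.distr_merge[OF IJ] f)
  have gi: "integrable (PiM I (\<lambda>_. stdN) \<Otimes>\<^sub>M PiM J (\<lambda>_. stdN)) (\<lambda>p. g (merge I J p))"
    by (rule integrable_distr[OF measurable_merge]) (simp add: PS.distr_merge[OF IJ] g)
  have "(\<integral>w. g w \<partial>PiM (I \<union> J) (\<lambda>_. stdN)) = (\<integral>x. (\<integral>y. g (merge I J (x,y)) \<partial>PiM J (\<lambda>_. stdN)) \<partial>PiM I (\<lambda>_. stdN))"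
    by (rule PS.product_integral_fold[OF IJ g])
  also have "\<dots> \<le> (\<integral>x. (\<integral>y. f (merge I J (x,y)) \<partial>PiM J (\<lambda>_. stdN)) \<partial>PiM I (\<lambda>_. stdN))"
    by (rule integral_mono[OF PP.integrable_fst'[OF gi] PP.integrable_fst'[OF fi]]) (rule le)
  also have "\<dots> = (\<integral>w. f w \<partial>PiM (I \<union> J) (\<lambda>_. stdN))"
    by (rule PS.product_integral_fold[OF IJ f, symmetric])
  finally show ?thesis .
qed

definition xr :: "(('n \<times> 'q) \<times> bool \<Rightarrow> real) \<Rightarrow> 'n \<Rightarrow> real^'q \<Rightarrow> real" where
  "xr w i v = (\<Sum>j\<in>UNIV. w ((i,j),False) * v$j)"
definition xg :: "(('n \<times> 'q) \<times> bool \<Rightarrow> real) \<Rightarrow> 'n \<Rightarrow> real^'q \<Rightarrow> real" where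
  "xg w i v = (\<Sum>j\<in>UNIV. w ((i,j),True) * v$j)"

abbreviation PP :: "(('n::finite \<times> 'q::finite) \<times> bool \<Rightarrow> real) measure" where
  "PP \<equiv> PiM UNIV (\<lambda>_. stdN)"

lemma integrable_lin[intro]:
  "integrable (PiM UNIV (\<lambda>_::'i::finite. stdN)) (\<lambda>w. \<Sum>j\<in>A. w (k j) * c j)"
  by (intro Bochner_Integration.integrable_sum integrable_mult_left) (rule GP_integrable_coord)

lemma integrable_xr[simp, intro]: "integrable PP (\<lambda>w. xr w i v)"
  unfolding xr_def by (rule integrable_lin)
lemma integrable_xg[simp, intro]: "integrable PP (\<lambda>w. xg w i v)"
  unfolding xg_def by (rule integrable_lin)

lemma measurable_xr[measurable]: "(\<lambda>w. xr w i v) \<in> borel_measurable PP"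
  using integrable_xr by blast
lemma measurable_xg[measurable]: "(\<lambda>w. xg w i v) \<in> borel_measurable PP"
  using integrable_xg by blast

lemma GP_integrable_const[simp, intro]: "integrable (PiM I (\<lambda>_. stdN)) (\<lambda>x. c)"
proof -
  interpret prob_space "PiM I (\<lambda>_. stdN)" by simp
  show ?thesis by simp
qed

lemma norm_vec_sum: "norm (v::real^'q) = sqrt (\<Sum>j\<in>UNIV. (v$j)^2)"
  by (simp add: norm_vec_def L2_set_def)

lemma stepA:
  fixes F :: "(real^'q::finite) set"
  assumes F: "finite F" "F \<noteq> {}"
  shows "(\<integral>w. Max ((\<lambda>v. sqrt (2/pi) * norm v - (1 / real CARD('n)) * (\<Sum>i\<in>UNIV. \<bar>xr w i v\<bar>)) ` F)
            \<partial>(PP::(('n::finite \<times> 'q) \<times> bool \<Rightarrow> real) measure))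
       \<le> (\<integral>w. (1 / real CARD('n)) * Max ((\<lambda>v. \<Sum>i\<in>UNIV. (\<bar>xg w i v\<bar> - \<bar>xr w i v\<bar>)) ` F) \<partial>(PP::(('n \<times> 'q) \<times> bool \<Rightarrow> real) measure))"
proof -
  define I0 where "I0 = {k::('n \<times> 'q) \<times> bool. \<not> snd k}"
  define J0 where "J0 = {k::('n \<times> 'q) \<times> bool. snd k}"
  have U: "I0 \<union> J0 = UNIV" "I0 \<inter> J0 = {}" "finite I0" "finite J0" by (auto simp: I0_def J0_def)
  let ?nn = "real CARD('n)"
  let ?c = "sqrt (2/pi)"
  let ?g = "\<lambda>w. Max ((\<lambda>v. ?c * norm v - (1 / ?nn) * (\<Sum>i\<in>(UNIV::'n set). \<bar>xr w i v\<bar>)) ` F)"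
  let ?f = "\<lambda>w. (1 / ?nn) * Max ((\<lambda>v. \<Sum>i\<in>(UNIV::'n set). (\<bar>xg w i v\<bar> - \<bar>xr w i v\<bar>)) ` F)"
  have gi: "integrable PP ?g"
    by (intro integrable_Max_fun F integrable_diff integrable_mult_right Bochner_Integration.integrable_sum integrable_abs) auto
  have fi: "integrable PP ?f"
    by (intro integrable_mult_right integrable_Max_fun F integrable_diff Bochner_Integration.integrable_sum integrable_abs) auto
  interpret PJ: prob_space "PiM J0 (\<lambda>_. stdN)" by simp
  have "(\<integral>w. ?g w \<partial>PiM (I0 \<union> J0) (\<lambda>_. stdN)) \<le> (\<integral>w. ?f w \<partial>PiM (I0 \<union> J0) (\<lambda>_. stdN))"
  proof (rule GP_fold_ineq2[OF U(2,3,4)])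
    show "integrable (PiM (I0 \<union> J0) (\<lambda>_. stdN)) ?f" using fi by (simp add: U)
    show "integrable (PiM (I0 \<union> J0) (\<lambda>_. stdN)) ?g" using gi by (simp add: U)
    fix x assume x: "x \<in> space (PiM I0 (\<lambda>_. stdN))"
    define a where "a i v = (\<Sum>j\<in>UNIV. x ((i,j),False) * v$j)" for i v
    have mr: "xr (merge I0 J0 (x,y)) i v = a i v" for y i v
      by (simp add: xr_def a_def merge_def I0_def)
    have mg: "xg (merge I0 J0 (x,y)) i v = (\<Sum>j\<in>UNIV. v$j * y ((i,j),True))" for y i v
      by (simp add: xg_def merge_def I0_def J0_def mult.commute)
    have absint: "integrable (PiM J0 (\<lambda>_. stdN)) (\<lambda>y. \<bar>\<Sum>j\<in>UNIV. v$j * y ((i,j),True)\<bar>)"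
      and absval: "(\<integral>y. \<bar>\<Sum>j\<in>UNIV. v$j * y ((i,j),True)\<bar> \<partial>PiM J0 (\<lambda>_. stdN)) = norm v * ?c" for i v
    proof -
      have inj: "inj (\<lambda>j::'q. ((i,j),True))" by (auto simp: inj_def)
      have sub: "range (\<lambda>j::'q. ((i,j),True)) \<subseteq> J0" by (auto simp: J0_def)
      show "integrable (PiM J0 (\<lambda>_. stdN)) (\<lambda>y. \<bar>\<Sum>j\<in>UNIV. v$j * y ((i,j),True)\<bar>)"
        using GP_abs_lincomb(1)[OF inj sub, of "\<lambda>j. v$j"] by simp
      show "(\<integral>y. \<bar>\<Sum>j\<in>UNIV. v$j * y ((i,j),True)\<bar> \<partial>PiM J0 (\<lambda>_. stdN)) = norm v * ?c"
        using GP_abs_lincomb(2)[OF inj sub, of "\<lambda>j. v$j"] by (simp add: norm_vec_sum)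
    qed
    have "(\<integral>y. ?g (merge I0 J0 (x,y)) \<partial>PiM J0 (\<lambda>_. stdN))
        = Max ((\<lambda>v. ?c * norm v - (1 / ?nn) * (\<Sum>i\<in>UNIV. \<bar>a i v\<bar>)) ` F)"
      by (simp add: mr PJ.prob_space)
    also have "\<dots> \<le> (\<integral>y. ?f (merge I0 J0 (x,y)) \<partial>PiM J0 (\<lambda>_. stdN))"
    proof (rule Max.boundedI)
      show "finite ((\<lambda>v. ?c * norm v - (1 / ?nn) * (\<Sum>i\<in>UNIV. \<bar>a i v\<bar>)) ` F)" using F by simp
      show "(\<lambda>v. ?c * norm v - (1 / ?nn) * (\<Sum>i\<in>UNIV. \<bar>a i v\<bar>)) ` F \<noteq> {}" using F by simp
      fix r assume "r \<in> (\<lambda>v. ?c * norm v - (1 / ?nn) * (\<Sum>i\<in>UNIV. \<bar>a i v\<bar>)) ` F"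
      then obtain v where v: "v \<in> F" and r: "r = ?c * norm v - (1 / ?nn) * (\<Sum>i\<in>UNIV. \<bar>a i v\<bar>)" by auto
      have int1: "integrable (PiM J0 (\<lambda>_. stdN)) (\<lambda>y. \<Sum>i\<in>UNIV. (\<bar>\<Sum>j\<in>UNIV. v$j * y ((i,j),True)\<bar> - \<bar>a i v\<bar>))"
        using absint by (intro Bochner_Integration.integrable_sum integrable_diff) auto
      have "?c * norm v - (1 / ?nn) * (\<Sum>i\<in>UNIV. \<bar>a i v\<bar>)
          = (1 / ?nn) * (\<integral>y. (\<Sum>i\<in>UNIV. (\<bar>\<Sum>j\<in>UNIV. v$j * y ((i,j),True)\<bar> - \<bar>a i v\<bar>)) \<partial>PiM J0 (\<lambda>_. stdN))"
        using absint absval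
        by (simp add: Bochner_Integration.integral_sum integral_diff PJ.prob_space sum_subtractf field_simps)
      also have "\<dots> = (\<integral>y. (1 / ?nn) * (\<Sum>i\<in>UNIV. (\<bar>\<Sum>j\<in>UNIV. v$j * y ((i,j),True)\<bar> - \<bar>a i v\<bar>)) \<partial>PiM J0 (\<lambda>_. stdN))"
        by simp
      also have "\<dots> \<le> (\<integral>y. ?f (merge I0 J0 (x,y)) \<partial>PiM J0 (\<lambda>_. stdN))"
      proof (rule integral_mono)
        show "integrable (PiM J0 (\<lambda>_. stdN)) (\<lambda>y. (1 / ?nn) * (\<Sum>i\<in>UNIV. (\<bar>\<Sum>j\<in>UNIV. v$j * y ((i,j),True)\<bar> - \<bar>a i v\<bar>)))"
          using int1 by simp
        have "integrable (PiM J0 (\<lambda>_. stdN)) (\<lambda>y. (1 / ?nn) * Max ((\<lambda>v. \<Sum>i\<in>UNIV. (\<bar>\<Sum>j\<in>UNIV. v$j * y ((i,j),True)\<bar> - \<bar>a i v\<bar>)) ` F))"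
          using absint by (intro integrable_mult_right integrable_Max_fun F Bochner_Integration.integrable_sum integrable_diff) auto
        then show "integrable (PiM J0 (\<lambda>_. stdN)) (\<lambda>y. ?f (merge I0 J0 (x,y)))"
          by (simp add: mr mg)
        fix y
        show "(1 / ?nn) * (\<Sum>i\<in>UNIV. (\<bar>\<Sum>j\<in>UNIV. v$j * y ((i,j),True)\<bar> - \<bar>a i v\<bar>)) \<le> ?f (merge I0 J0 (x,y))"
          unfolding mr mg using v F by (intro mult_left_mono Max_ge) auto
      qed
      finally show "r \<le> (\<integral>y. ?f (merge I0 J0 (x,y)) \<partial>PiM J0 (\<lambda>_. stdN))" using r by simp
    qed
    finally show "(\<integral>y. ?g (merge I0 J0 (x,y)) \<partial>PiM J0 (\<lambda>_. stdN)) \<le> (\<integral>y. ?f (merge I0 J0 (x,y)) \<partial>PiM J0 (\<lambda>_. stdN))" .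
  qed
  then show ?thesis by (simp only: U(1))
qed

definition swp :: "('n \<Rightarrow> bool) \<Rightarrow> ('n \<times> 'q) \<times> bool \<Rightarrow> ('n \<times> 'q) \<times> bool" where
  "swp s k = (fst k, snd k \<noteq> s (fst (fst k)))"

lemma inj_swp: "inj (swp s)"
  by (auto simp: inj_def swp_def prod_eq_iff)

lemma xr_swp: "xr (\<lambda>k. w (swp s k)) i v = (if s i then xg w i v else xr w i v)"
  by (simp add: xr_def xg_def swp_def)
lemma xg_swp: "xg (\<lambda>k. w (swp s k)) i v = (if s i then xr w i v else xg w i v)"
  by (simp add: xr_def xg_def swp_def)

lemma sg_not[simp]: "sg (\<not> b) = - sg b" by (simp add: sg_def)

lemma Max_add_le:
  fixes f g :: "'v \<Rightarrow> real"
  assumes "finite F" "F \<noteq> {}"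
  shows "Max ((\<lambda>v. f v + g v) ` F) \<le> Max (f ` F) + Max (g ` F)"
  using assms by (auto intro!: add_mono Max_ge)

lemma Max_cmult:
  fixes f :: "'v \<Rightarrow> real"
  assumes "finite F" "F \<noteq> {}" "0 \<le> c"
  shows "Max ((\<lambda>v. c * f v) ` F) = c * Max (f ` F)"
proof -
  have "mono ((*) c)" using assms by (auto intro: monoI mult_left_mono)
  then have "(*) c (Max (f ` F)) = Max ((*) c ` (f ` F))"
    using assms by (intro mono_Max_commute) auto
  then show ?thesis by (simp add: image_image)
qed

lemma stepBH:
  fixes F :: "(real^'q::finite) set"
  assumes F: "finite F" "F \<noteq> {}"
  shows "(\<integral>w. Max ((\<lambda>v. \<Sum>i\<in>UNIV. (\<bar>xg w i v\<bar> - \<bar>xr w i v\<bar>)) ` F) \<partial>(PP::(('n::finite \<times> 'q) \<times> bool \<Rightarrow> real) measure))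
       \<le> 2 * sqrt (real CARD('n)) * (\<integral>z. Max ((\<lambda>v. \<Sum>j\<in>UNIV. z j * v$j) ` F) \<partial>PiM UNIV (\<lambda>_::'q. stdN))"
proof -
  let ?P = "PP::(('n \<times> 'q) \<times> bool \<Rightarrow> real) measure"
  define H where "H w = Max ((\<lambda>v. \<Sum>i\<in>(UNIV::'n set). (\<bar>xg w i v\<bar> - \<bar>xr w i v\<bar>)) ` F)" for w
  define Hs where "Hs s w = Max ((\<lambda>v. \<Sum>i\<in>(UNIV::'n set). sg (s i) * (\<bar>xg w i v\<bar> - \<bar>xr w i v\<bar>)) ` F)" for s w
  define A where "A s w = Max ((\<lambda>v. \<Sum>i\<in>(UNIV::'n set). sg (s i) * \<bar>xr w i v\<bar>) ` F)" for s w
  define B where "B s w = Max ((\<lambda>v. \<Sum>i\<in>(UNIV::'n set). sg (s i) * \<bar>xg w i v\<bar>) ` F)" for s w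
  define Bn where "Bn s w = Max ((\<lambda>v. \<Sum>i\<in>(UNIV::'n set). - sg (s i) * \<bar>xr w i v\<bar>) ` F)" for s w
  define C where "C s w = Max ((\<lambda>v. \<Sum>i\<in>(UNIV::'n set). sg (s i) * xr w i v) ` F)" for s w
  define C0 where "C0 w = Max ((\<lambda>v. \<Sum>i\<in>(UNIV::'n set). xr w i v) ` F)" for w
  have iH: "integrable ?P H" unfolding H_def
    by (intro integrable_Max_fun F integrable_diff Bochner_Integration.integrable_sum integrable_abs) auto
  have iHs: "integrable ?P (Hs s)" for s unfolding Hs_def
    by (intro integrable_Max_fun F integrable_diff integrable_mult_right Bochner_Integration.integrable_sum integrable_abs) auto
  have iA: "integrable ?P (A s)" for s unfolding A_def
    by (intro integrable_Max_fun F integrable_mult_right Bochner_Integration.integrable_sum integrable_abs) auto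
  have iB: "integrable ?P (B s)" for s unfolding B_def
    by (intro integrable_Max_fun F integrable_mult_right Bochner_Integration.integrable_sum integrable_abs) auto
  have iBn: "integrable ?P (Bn s)" for s unfolding Bn_def
    by (intro integrable_Max_fun F integrable_mult_right Bochner_Integration.integrable_sum integrable_abs) auto
  have iC: "integrable ?P (C s)" for s unfolding C_def
    by (intro integrable_Max_fun F integrable_mult_right Bochner_Integration.integrable_sum) auto
  have iC0: "integrable ?P C0" unfolding C0_def
    by (intro integrable_Max_fun F Bochner_Integration.integrable_sum) auto
  have sgs: "sg b * (x - y) = sg b * x + (- sg b) * y" for b x y by (simp add: algebra_simps)
  have B1: "(\<integral>w. H w \<partial>?P) = (\<integral>w. Hs s w \<partial>?P)" for s
  proof -
    have "(\<integral>w. H w \<partial>?P) = (\<integral>w. H (\<lambda>k. w (swp s k)) \<partial>?P)"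
      by (rule GP_reindex[OF inj_swp]) (use iH in blast)
    also have "(\<lambda>w. H (\<lambda>k. w (swp s k))) = Hs s"
    proof
      fix w :: "('n \<times> 'q) \<times> bool \<Rightarrow> real"
      have "(\<Sum>i\<in>UNIV. \<bar>xg (\<lambda>k. w (swp s k)) i v\<bar> - \<bar>xr (\<lambda>k. w (swp s k)) i v\<bar>)
          = (\<Sum>i\<in>UNIV. sg (s i) * (\<bar>xg w i v\<bar> - \<bar>xr w i v\<bar>))" for v
        by (intro sum.cong) (auto simp: xr_swp xg_swp sg_def)
      then show "H (\<lambda>k. w (swp s k)) = Hs s w" unfolding H_def Hs_def by simp
    qed
    finally show ?thesis .
  qed
  have B2: "Hs s w \<le> B s w + Bn s w" for s w
    unfolding Hs_def B_def Bn_def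
    using Max_add_le[OF F, of "\<lambda>v. \<Sum>i\<in>UNIV. sg (s i) * \<bar>xg w i v\<bar>" "\<lambda>v. \<Sum>i\<in>UNIV. - sg (s i) * \<bar>xr w i v\<bar>"]
    by (simp add: right_diff_distrib sum_subtractf sum_negf)
  have B3: "(\<integral>w. B s w \<partial>?P) = (\<integral>w. A s w \<partial>?P)" for s
  proof -
    have "(\<integral>w. B s w \<partial>?P) = (\<integral>w. B s (\<lambda>k. w (swp (\<lambda>_. True) k)) \<partial>?P)"
      by (rule GP_reindex[OF inj_swp]) (use iB in blast)
    also have "(\<lambda>w. B s (\<lambda>k. w (swp (\<lambda>_. True) k))) = A s"
      by (auto simp: B_def A_def xg_swp fun_eq_iff)
    finally show ?thesis .
  qed
  have B4: "(\<Sum>s\<in>UNIV. Bn s w) = (\<Sum>s\<in>UNIV. A s w)" for w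
  proof -
    have "(\<Sum>s\<in>UNIV. Bn s w) = (\<Sum>s\<in>UNIV. A (\<lambda>i. \<not> s i) w)"
      by (intro sum.cong) (auto simp: Bn_def A_def)
    also have "\<dots> = (\<Sum>s\<in>UNIV. A s w)"
      by (rule sum.reindex_bij_witness[of _ "\<lambda>s i. \<not> s i" "\<lambda>s i. \<not> s i"]) auto
    finally show ?thesis .
  qed
  have B5: "(\<Sum>s\<in>UNIV. A s w) \<le> (\<Sum>s\<in>UNIV. C s w)" for w
    unfolding A_def C_def by (rule contraction[OF F])
  have B6: "(\<integral>w. C s w \<partial>?P) = (\<integral>w. C0 w \<partial>?P)" for s
  proof -
    define \<sigma> where "\<sigma> k = sg (s (fst (fst k)))" for k :: "('n \<times> 'q) \<times> bool"
    have "(\<integral>w. C0 w \<partial>?P) = (\<integral>w. C0 (\<lambda>k. \<sigma> k * w k) \<partial>?P)"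
      by (rule GP_signflip) (auto simp: \<sigma>_def sg_def intro: borel_measurable_integrable[OF iC0])
    also have "(\<lambda>w. C0 (\<lambda>k. \<sigma> k * w k)) = C s"
    proof
      fix w :: "('n \<times> 'q) \<times> bool \<Rightarrow> real"
      have "xr (\<lambda>k. \<sigma> k * w k) i v = sg (s i) * xr w i v" for i v
        by (simp add: xr_def \<sigma>_def sum_distrib_left mult.assoc)
      then show "C0 (\<lambda>k. \<sigma> k * w k) = C s w" by (simp add: C0_def C_def)
    qed
    finally show ?thesis by simp
  qed
  let ?N = "real (card (UNIV :: ('n \<Rightarrow> bool) set))"
  have Npos: "0 < ?N" by simp
  have "?N * (\<integral>w. H w \<partial>?P) = (\<Sum>s\<in>UNIV. \<integral>w. Hs s w \<partial>?P)"
    using B1 by simp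
  also have "\<dots> \<le> (\<Sum>s\<in>UNIV. (\<integral>w. B s w \<partial>?P) + (\<integral>w. Bn s w \<partial>?P))"
  proof (intro sum_mono)
    fix s
    have "(\<integral>w. Hs s w \<partial>?P) \<le> (\<integral>w. B s w + Bn s w \<partial>?P)"
      by (intro integral_mono iHs Bochner_Integration.integrable_add iB iBn B2)
    then show "(\<integral>w. Hs s w \<partial>?P) \<le> (\<integral>w. B s w \<partial>?P) + (\<integral>w. Bn s w \<partial>?P)"
      by (simp add: Bochner_Integration.integral_add iB iBn)
  qed
  also have "\<dots> = (\<Sum>s\<in>UNIV. \<integral>w. A s w \<partial>?P) + (\<integral>w. (\<Sum>s\<in>UNIV. Bn s w) \<partial>?P)"
    by (simp add: sum.distrib B3 Bochner_Integration.integral_sum iBn)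
  also have "\<dots> = 2 * (\<integral>w. (\<Sum>s\<in>UNIV. A s w) \<partial>?P)"
    by (simp add: B4 Bochner_Integration.integral_sum iA)
  also have "\<dots> \<le> 2 * (\<integral>w. (\<Sum>s\<in>UNIV. C s w) \<partial>?P)"
    by (intro mult_left_mono integral_mono B5) (auto intro: iA iC)
  also have "\<dots> = 2 * (?N * (\<integral>w. C0 w \<partial>?P))"
    by (simp add: Bochner_Integration.integral_sum iC B6)
  finally have HC: "(\<integral>w. H w \<partial>?P) \<le> 2 * (\<integral>w. C0 w \<partial>?P)"
    using Npos by (simp add: mult.left_commute)
  let ?c = "1 / sqrt (real CARD('n))"
  define h where "h z = Max ((\<lambda>v. \<Sum>j\<in>UNIV. z j * v$j) ` F)" for z :: "'q \<Rightarrow> real"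
  have hm: "h \<in> borel_measurable (PiM UNIV (\<lambda>_::'q. stdN))"
  proof -
    have "integrable (PiM UNIV (\<lambda>_::'q. stdN)) h" unfolding h_def
      by (intro integrable_Max_fun F Bochner_Integration.integrable_sum integrable_mult_left) auto
    then show ?thesis by blast
  qed
  have C0h: "C0 w = sqrt (real CARD('n)) * h (\<lambda>j. ?c * (\<Sum>i\<in>UNIV. w ((i,j),False)))" for w
  proof -
    have "(\<Sum>i\<in>UNIV. xr w i v) = sqrt (real CARD('n)) * (\<Sum>j\<in>UNIV. ?c * (\<Sum>i\<in>UNIV. w ((i,j),False)) * v$j)" for v
      by (simp add: xr_def sum_distrib_left sum_distrib_right sum.swap[of _ "UNIV::'n set"])
    then have "C0 w = Max ((\<lambda>v. sqrt (real CARD('n)) * (\<Sum>j\<in>UNIV. ?c * (\<Sum>i\<in>UNIV. w ((i,j),False)) * v$j)) ` F)"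
      by (simp add: C0_def)
    also have "\<dots> = sqrt (real CARD('n)) * h (\<lambda>j. ?c * (\<Sum>i\<in>UNIV. w ((i,j),False)))"
      unfolding h_def by (rule Max_cmult[OF F]) simp
    finally show ?thesis .
  qed
  have "(\<integral>w. C0 w \<partial>?P) = sqrt (real CARD('n)) * (\<integral>z. h z \<partial>PiM UNIV (\<lambda>_::'q. stdN))"
  proof -
    have R: "(\<integral>w. h (\<lambda>j. ?c * (\<Sum>i\<in>UNIV. w ((i,j),False))) \<partial>?P) = (\<integral>z. h z \<partial>PiM UNIV (\<lambda>_::'q. stdN))"
      by (rule GP_rowsum[OF hm])
    have "(\<integral>w. C0 w \<partial>?P) = (\<integral>w. sqrt (real CARD('n)) * h (\<lambda>j. ?c * (\<Sum>i\<in>UNIV. w ((i,j),False))) \<partial>?P)"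
      by (simp only: C0h)
    also have "\<dots> = sqrt (real CARD('n)) * (\<integral>w. h (\<lambda>j. ?c * (\<Sum>i\<in>UNIV. w ((i,j),False))) \<partial>?P)"
      by (rule integral_mult_right_zero)
    finally show ?thesis by (simp only: R)
  qed
  then show ?thesis using HC by (simp add: H_def h_def)
qed



lemma core_P:
  fixes F :: "(real^'q::finite) set"
  assumes F: "finite F" "F \<noteq> {}"
  shows "(\<integral>w. Max ((\<lambda>v. sqrt (2/pi) * norm v - (1 / real CARD('n)) * (\<Sum>i\<in>UNIV. \<bar>xr w i v\<bar>)) ` F)
            \<partial>(PP::(('n::finite \<times> 'q) \<times> bool \<Rightarrow> real) measure))
       \<le> 2 / sqrt (real CARD('n)) * (\<integral>z. Max ((\<lambda>v. \<Sum>j\<in>UNIV. z j * v$j) ` F) \<partial>PiM UNIV (\<lambda>_::'q. stdN))"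
proof -
  let ?nn = "real CARD('n)"
  let ?P = "PP::(('n \<times> 'q) \<times> bool \<Rightarrow> real) measure"
  have "(\<integral>w. Max ((\<lambda>v. sqrt (2/pi) * norm v - (1 / ?nn) * (\<Sum>i\<in>UNIV. \<bar>xr w i v\<bar>)) ` F) \<partial>?P)
       \<le> (\<integral>w. (1 / ?nn) * Max ((\<lambda>v. \<Sum>i\<in>UNIV. (\<bar>xg w i v\<bar> - \<bar>xr w i v\<bar>)) ` F) \<partial>?P)"
    by (rule stepA[OF F])
  also have "\<dots> = (1 / ?nn) * (\<integral>w. Max ((\<lambda>v. \<Sum>i\<in>UNIV. (\<bar>xg w i v\<bar> - \<bar>xr w i v\<bar>)) ` F) \<partial>?P)"
    by (rule integral_mult_right_zero)
  also have "\<dots> \<le> (1 / ?nn) * (2 * sqrt ?nn * (\<integral>z. Max ((\<lambda>v. \<Sum>j\<in>UNIV. z j * v$j) ` F) \<partial>PiM UNIV (\<lambda>_::'q. stdN)))"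
    by (intro mult_left_mono stepBH[OF F]) simp
  also have "\<dots> = 2 / sqrt ?nn * (\<integral>z. Max ((\<lambda>v. \<Sum>j\<in>UNIV. z j * v$j) ` F) \<partial>PiM UNIV (\<lambda>_::'q. stdN))"
  proof -
    have pos: "0 < sqrt ?nn" by simp
    have sq: "?nn = sqrt ?nn * sqrt ?nn" by simp
    have "(1 / ?nn) * (2 * sqrt ?nn) = 2 / sqrt ?nn"
      by (subst sq) (use pos in \<open>simp add: field_simps\<close>)
    then show ?thesis by (simp only: mult.assoc[symmetric])
  qed
  finally show ?thesis .
qed

lemma GP_reindex2:
  fixes f :: "'j \<Rightarrow> 'i" and h :: "('j \<Rightarrow> real) \<Rightarrow> real"
  assumes "inj f" and h: "h \<in> borel_measurable (PiM UNIV (\<lambda>_::'j. stdN))"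
  shows "(\<integral>w. h w \<partial>PiM UNIV (\<lambda>_::'j. stdN)) = (\<integral>w. h (\<lambda>k. w (f k)) \<partial>PiM UNIV (\<lambda>_::'i. stdN))"
proof -
  let ?P = "PiM UNIV (\<lambda>_::'i. stdN)"
  let ?Q = "PiM UNIV (\<lambda>_::'j. stdN)"
  have D: "distr ?P ?Q (\<lambda>\<omega>. \<lambda>n\<in>UNIV. \<omega> (f n)) = ?Q"
    using distr_PiM_reindex[of UNIV "\<lambda>_. stdN" f UNIV] assms by simp
  have T: "(\<lambda>\<omega>. \<lambda>n\<in>UNIV. \<omega> (f n)) \<in> measurable ?P ?Q"
    by (intro measurable_restrict measurable_component_singleton) simp
  have "(\<integral>w. h w \<partial>?Q) = (\<integral>w. h w \<partial>distr ?P ?Q (\<lambda>\<omega>. \<lambda>n\<in>UNIV. \<omega> (f n)))" using D by simp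
  also have "\<dots> = (\<integral>w. h (\<lambda>n\<in>UNIV. w (f n)) \<partial>?P)"
    by (rule integral_distr[OF T h])
  finally show ?thesis by (simp add: restrict_def)
qed

lemma transfer_nn:
  fixes X :: "'i \<Rightarrow> 'a \<Rightarrow> real" and h :: "('i \<Rightarrow> real) \<Rightarrow> real"
  assumes "prob_space M" and ind: "prob_space.indep_vars M (\<lambda>_. borel) X UNIV"
    and d: "\<And>i. distributed M lborel (X i) std_normal_density"
    and h: "h \<in> borel_measurable (PiM UNIV (\<lambda>_::'i. stdN))"
  shows "(\<integral>\<^sup>+\<omega>. ennreal (h (\<lambda>i. X i \<omega>)) \<partial>M) = (\<integral>\<^sup>+z. ennreal (h z) \<partial>PiM UNIV (\<lambda>_::'i. stdN))"
proof -
  interpret prob_space M by fact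
  have T: "(\<lambda>x i. X i x) \<in> measurable M (PiM UNIV (\<lambda>_::'i. stdN))"
    using ind unfolding indep_vars_def
    by (intro measurable_PiM_single') (auto simp: measurable_cong_sets[OF refl sets_stdN] space_PiM)
  have "(\<integral>\<^sup>+z. ennreal (h z) \<partial>PiM UNIV (\<lambda>_::'i. stdN)) = (\<integral>\<^sup>+z. ennreal (h z) \<partial>distr M (PiM UNIV (\<lambda>_::'i. stdN)) (\<lambda>x i. X i x))"
    using std_family[OF assms(1) ind d] by simp
  also have "\<dots> = (\<integral>\<^sup>+\<omega>. ennreal (h (\<lambda>i. X i \<omega>)) \<partial>M)"
    by (rule nn_integral_distr[OF T]) (use h in measurable)
  finally show ?thesis by simp
qed



lemma quad_form_norm:
  fixes C :: "real^'p^'q" and u :: "real^'p"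
  shows "sqrt (u \<bullet> ((transpose C ** C) *v u)) = norm (C *v u)"
proof -
  have "u \<bullet> ((transpose C ** C) *v u) = u \<bullet> ((C *v u) v* C)"
    by (simp add: matrix_vector_mul_assoc[symmetric])
  also have "\<dots> = (C *v u) \<bullet> (C *v u)"
    by (metis inner_commute dot_lmul_matrix)
  finally show ?thesis by (simp add: power2_norm_eq_inner[symmetric])
qed

lemma l1norm_prod:
  fixes B :: "real^'q^'n" and C :: "real^'p^'q" and u :: "real^'p"
  shows "l1norm ((B ** C) *v u) = (\<Sum>i\<in>UNIV. \<bar>\<Sum>j\<in>UNIV. B $ i $ j * (C *v u) $ j\<bar>)"
  by (subst matrix_vector_mul_assoc[symmetric]) (simp add: l1norm_def matrix_vector_mult_def)

lemma gdot:
  fixes C :: "real^'p^'q" and u :: "real^'p" and y :: "real^'q"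
  shows "(transpose C *v y) \<bullet> u = (\<Sum>j\<in>UNIV. y $ j * (C *v u) $ j)"
proof -
  have "(transpose C *v y) \<bullet> u = y \<bullet> (C *v u)"
    by (simp add: dot_lmul_matrix)
  then show ?thesis by (simp add: inner_vec_def)
qed

lemma countable_dense_subset:
  fixes V :: "'a::{metric_space, second_countable_topology} set"
  obtains V0 where "countable V0" "V0 \<subseteq> V" "\<And>v. v \<in> V \<Longrightarrow> \<exists>x. (\<forall>m. x m \<in> V0) \<and> x \<longlonglongrightarrow> v"
proof -
  obtain D0 :: "'a set" where D0: "countable D0" "\<And>X. open X \<Longrightarrow> X \<noteq> {} \<Longrightarrow> \<exists>d\<in>D0. d \<in> X"
    using countable_dense_exists[where 'a='a] by blast
  define pick where "pick d m = (SOME v. v \<in> V \<and> dist v d < 1 / Suc m)" for d and m :: nat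
  define V0 where "V0 = (\<lambda>(d,m). pick d m) ` {(d,m). d \<in> D0 \<and> (\<exists>v\<in>V. dist v d < 1 / Suc m)}"
  have c: "countable V0" unfolding V0_def
    by (rule countable_image, rule countable_subset[of _ "D0 \<times> UNIV"]) (use D0(1) in auto)
  have s: "V0 \<subseteq> V"
  proof
    fix x assume "x \<in> V0"
    then obtain d m where "x = pick d m" "\<exists>v\<in>V. dist v d < 1 / Suc m" by (auto simp: V0_def)
    then show "x \<in> V" unfolding pick_def by (metis (mono_tags, lifting) someI_ex)
  qed
  have dn: "\<exists>x. (\<forall>m. x m \<in> V0) \<and> x \<longlonglongrightarrow> v" if v: "v \<in> V" for v
  proof -
    have "\<exists>d\<in>D0. d \<in> ball v (1 / Suc m)" for m :: nat
      by (rule D0(2)) auto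
    then obtain d where d: "\<And>m. d m \<in> D0" "\<And>m. dist v (d m) < 1 / Suc m"
      by (metis mem_ball)
    define x where "x m = pick (d m) m" for m
    have ex: "\<exists>w. w \<in> V \<and> dist w (d m) < 1 / Suc m" for m using v d(2)[of m] by blast
    have xV: "x m \<in> V0" for m unfolding x_def V0_def using d(1) ex by blast
    have xd: "dist (x m) (d m) < 1 / Suc m" for m
      unfolding x_def pick_def using someI_ex[OF ex[of m]] by blast
    have xv: "dist (x m) v < 2 / Suc m" for m
    proof -
      have "dist (x m) v \<le> dist (x m) (d m) + dist (d m) v" by (rule dist_triangle)
      also have "\<dots> < 1 / Suc m + 1 / Suc m" using xd[of m] d(2)[of m] by (simp add: dist_commute)
      finally show ?thesis by simp
    qed
    have "x \<longlonglongrightarrow> v"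
    proof (rule metric_LIMSEQ_I)
      fix r :: real assume r: "0 < r"
      obtain N :: nat where N: "2 / r < N" using reals_Archimedean2 by blast
      show "\<exists>no. \<forall>n\<ge>no. dist (x n) v < r"
      proof (intro exI allI impI)
        fix n assume "N \<le> n"
        then have "2 / r < Suc n" using N by linarith
        then have "2 / Suc n < r" using r by (simp add: field_simps)
        then show "dist (x n) v < r" using xv[of n] by linarith
      qed
    qed
    then show ?thesis using xV by blast
  qed
  show ?thesis by (rule that[OF c s dn])
qed

lemma key_finite:
  fixes M :: "'a measure" and B :: "'a \<Rightarrow> real^'q::finite^'n::finite" and g :: "'a \<Rightarrow> real^'q"
    and F :: "(real^'q) set"
  assumes M: "prob_space M"
    and B_indep: "prob_space.indep_vars M (\<lambda>_. borel) (\<lambda>(i, j) \<omega>. B \<omega> $ i $ j) UNIV"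
    and B_normal: "\<And>i j. distributed M lborel (\<lambda>\<omega>. B \<omega> $ i $ j) std_normal_density"
    and g_indep: "prob_space.indep_vars M (\<lambda>_. borel) (\<lambda>j \<omega>. g \<omega> $ j) UNIV"
    and g_normal: "\<And>j. distributed M lborel (\<lambda>\<omega>. g \<omega> $ j) std_normal_density"
    and F: "finite F" "0 \<in> F"
  shows "(\<integral>\<^sup>+\<omega>. ennreal (Max ((\<lambda>v. sqrt (2/pi) * norm v - (1 / real CARD('n)) * (\<Sum>i\<in>UNIV. \<bar>\<Sum>j\<in>UNIV. B \<omega> $ i $ j * v$j\<bar>)) ` F)) \<partial>M)
     \<le> ennreal (2 / sqrt (real CARD('n))) * (\<integral>\<^sup>+\<omega>. ennreal (Max ((\<lambda>v. \<Sum>j\<in>UNIV. g \<omega> $ j * v$j) ` F)) \<partial>M)"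
proof -
  let ?nn = "real CARD('n)"
  let ?c = "sqrt (2/pi)"
  let ?Q = "PiM UNIV (\<lambda>_::'q. stdN)"
  let ?R = "PiM UNIV (\<lambda>_::'n \<times> 'q. stdN)"
  let ?P = "PP::(('n \<times> 'q) \<times> bool \<Rightarrow> real) measure"
  have Fne: "F \<noteq> {}" using F by auto
  define G where "G z = Max ((\<lambda>v. ?c * norm v - (1 / ?nn) * (\<Sum>i\<in>UNIV. \<bar>\<Sum>j\<in>UNIV. z (i,j) * v$j\<bar>)) ` F)"
    for z :: "'n \<times> 'q \<Rightarrow> real"
  define h where "h z = Max ((\<lambda>v. \<Sum>j\<in>UNIV. z j * v$j) ` F)" for z :: "'q \<Rightarrow> real"
  have Gint: "integrable ?R G" unfolding G_def
    by (intro integrable_Max_fun F Fne integrable_diff integrable_mult_right Bochner_Integration.integrable_sum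
        integrable_abs integrable_mult_left) auto
  have hint: "integrable ?Q h" unfolding h_def
    by (intro integrable_Max_fun F Fne Bochner_Integration.integrable_sum integrable_mult_left) auto
  have Gnn: "0 \<le> G z" for z
  proof -
    have "?c * norm (0::real^'q) - (1 / ?nn) * (\<Sum>i\<in>UNIV. \<bar>\<Sum>j\<in>UNIV. z (i,j) * (0::real^'q)$j\<bar>) \<le> G z"
      unfolding G_def using F by (intro Max_ge finite_imageI rev_image_eqI[of 0]) auto
    then show ?thesis by simp
  qed
  have hnn: "0 \<le> h z" for z
  proof -
    have "(\<Sum>j\<in>UNIV. z j * (0::real^'q)$j) \<le> h z"
      unfolding h_def using F by (intro Max_ge finite_imageI rev_image_eqI[of 0]) auto
    then show ?thesis by simp
  qed
  define X where "X = (\<lambda>(i, j) \<omega>. B \<omega> $ i $ j)"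
  have Xd: "distributed M lborel (X ij) std_normal_density" for ij
    by (cases ij) (simp add: X_def B_normal)
  have "(\<integral>\<^sup>+\<omega>. ennreal (Max ((\<lambda>v. ?c * norm v - (1 / ?nn) * (\<Sum>i\<in>UNIV. \<bar>\<Sum>j\<in>UNIV. B \<omega> $ i $ j * v$j\<bar>)) ` F)) \<partial>M)
      = (\<integral>\<^sup>+\<omega>. ennreal (G (\<lambda>ij. X ij \<omega>)) \<partial>M)"
    by (simp add: G_def X_def)
  also have "\<dots> = (\<integral>\<^sup>+z. ennreal (G z) \<partial>?R)"
    by (rule transfer_nn[OF M _ Xd]) (use B_indep Gint in \<open>auto simp: X_def\<close>)
  also have "\<dots> = ennreal (\<integral>z. G z \<partial>?R)"
    by (rule nn_integral_eq_integral[OF Gint]) (simp add: Gnn)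
  also have "(\<integral>z. G z \<partial>?R) = (\<integral>w. G (\<lambda>k. w (k, False)) \<partial>?P)"
    by (rule GP_reindex2) (use Gint in \<open>auto simp: inj_def\<close>)
  also have "\<dots> = (\<integral>w. Max ((\<lambda>v. ?c * norm v - (1 / ?nn) * (\<Sum>i\<in>UNIV. \<bar>xr w i v\<bar>)) ` F) \<partial>?P)"
    by (simp add: G_def xr_def)
  also have "ennreal \<dots> \<le> ennreal (2 / sqrt ?nn * (\<integral>z. h z \<partial>?Q))"
    by (rule ennreal_leI) (unfold h_def, rule core_P[OF F(1) Fne])
  also have "\<dots> = ennreal (2 / sqrt ?nn) * ennreal (\<integral>z. h z \<partial>?Q)"
    by (rule ennreal_mult) (auto intro!: Bochner_Integration.integral_nonneg hnn)
  also have "ennreal (\<integral>z. h z \<partial>?Q) = (\<integral>\<^sup>+z. ennreal (h z) \<partial>?Q)"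
    by (rule nn_integral_eq_integral[OF hint, symmetric]) (simp add: hnn)
  also have "\<dots> = (\<integral>\<^sup>+\<omega>. ennreal (h (\<lambda>j. g \<omega> $ j)) \<partial>M)"
    by (rule transfer_nn[OF M g_indep g_normal, symmetric]) (use hint in auto)
  finally show ?thesis by (simp add: h_def)
qed



theorem theorem5:
  fixes M :: "'a measure"
    and B :: "'a \<Rightarrow> real ^ 'q ^ 'n"
    and g :: "'a \<Rightarrow> real ^ 'q"
    and C :: "real ^ 'p ^ 'q"
    and T :: "(real ^ 'p) set"
    and \<epsilon> :: real
  assumes "prob_space M"
    and "bounded T"
    and "\<epsilon> \<ge> 0"
    and B_indep: "prob_space.indep_vars M (\<lambda>_. borel) (\<lambda>(i, j) \<omega>. B \<omega> $ i $ j) UNIV"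
    and B_normal: "\<And>i j. distributed M lborel (\<lambda>\<omega>. B \<omega> $ i $ j) std_normal_density"
    and g_indep: "prob_space.indep_vars M (\<lambda>_. borel) (\<lambda>j \<omega>. g \<omega> $ j) UNIV"
    and g_normal: "\<And>j. distributed M lborel (\<lambda>\<omega>. g \<omega> $ j) std_normal_density"
  shows "(\<integral>\<^sup>+ \<omega>. (\<Squnion>u\<in>{u \<in> T. l1norm ((B \<omega> ** C) *v u) / real CARD('n) \<le> \<epsilon>}.
              ennreal (sqrt (u \<bullet> ((transpose C ** C) *v u)))) \<partial>M)
         \<le> ennreal (sqrt (2 * pi / real CARD('n))) *
             (\<integral>\<^sup>+ \<omega>. (\<Squnion>u\<in>T. ennreal \<bar>(transpose C *v g \<omega>) \<bullet> u\<bar>) \<partial>M)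
           + ennreal (sqrt (pi / 2) * \<epsilon>)"
proof -
  interpret prob_space M by fact
  let ?nn = "real CARD('n)"
  let ?c = "sqrt (2/pi)"
  let ?k = "sqrt (pi/2)"
  define V where "V = (\<lambda>u. C *v u) ` T"
  define Dz where "Dz \<omega> v = ?c * norm v - (1 / ?nn) * (\<Sum>i\<in>UNIV. \<bar>\<Sum>j\<in>UNIV. B \<omega> $ i $ j * v$j\<bar>)"
    for \<omega> and v :: "real^'q"
  define R where "R \<omega> = (\<Squnion>u\<in>T. ennreal \<bar>(transpose C *v g \<omega>) \<bullet> u\<bar>)" for \<omega>
  define S where "S \<omega> = (\<Squnion>v\<in>V. ennreal (Dz \<omega> v))" for \<omega>
  have ck: "?c * ?k = 1"
    by (simp add: real_sqrt_mult[symmetric])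
  have Bm[measurable]: "(\<lambda>\<omega>. B \<omega> $ i $ j) \<in> borel_measurable M" for i j
    using B_normal[of i j] unfolding distributed_def by simp
  have pw: "(\<Squnion>u\<in>{u \<in> T. l1norm ((B \<omega> ** C) *v u) / ?nn \<le> \<epsilon>}. ennreal (sqrt (u \<bullet> ((transpose C ** C) *v u))))
      \<le> ennreal (?k * \<epsilon>) + ennreal ?k * S \<omega>" for \<omega>
  proof (rule SUP_least)
    fix u assume u: "u \<in> {u \<in> T. l1norm ((B \<omega> ** C) *v u) / ?nn \<le> \<epsilon>}"
    define v where "v = C *v u"
    have vV: "v \<in> V" using u by (auto simp: V_def v_def)
    have e1: "sqrt (u \<bullet> ((transpose C ** C) *v u)) = norm v"
      by (simp add: v_def quad_form_norm)
    have l1: "(\<Sum>i\<in>UNIV. \<bar>\<Sum>j\<in>UNIV. B \<omega> $ i $ j * v$j\<bar>) / ?nn \<le> \<epsilon>"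
      using u by (simp add: l1norm_prod v_def)
    have "?c * norm v \<le> Dz \<omega> v + \<epsilon>"
      using l1 by (simp add: Dz_def)
    then have a1: "?k * (?c * norm v) \<le> ?k * (Dz \<omega> v + \<epsilon>)" by (rule mult_left_mono) simp
    have a2: "?k * (?c * norm v) = norm v"
      using ck by (simp only: mult.assoc[symmetric] mult.commute[of ?k ?c])
    have a3: "?k * Dz \<omega> v \<le> ?k * max 0 (Dz \<omega> v)"
      by (rule mult_left_mono) auto
    have a4: "?k * (Dz \<omega> v + \<epsilon>) = ?k * Dz \<omega> v + ?k * \<epsilon>" by (simp add: distrib_left)
    have nv: "norm v \<le> ?k * \<epsilon> + ?k * max 0 (Dz \<omega> v)"
      using a1 a2 a3 a4 by linarith
    have "ennreal (norm v) \<le> ennreal (?k * \<epsilon> + ?k * max 0 (Dz \<omega> v))"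
      by (rule ennreal_leI[OF nv])
    also have "\<dots> = ennreal (?k * \<epsilon>) + ennreal ?k * ennreal (max 0 (Dz \<omega> v))"
      using \<open>\<epsilon> \<ge> 0\<close> by (simp add: ennreal_plus ennreal_mult)
    also have "ennreal (max 0 (Dz \<omega> v)) = ennreal (Dz \<omega> v)"
      by (cases "Dz \<omega> v \<ge> 0") (auto simp: ennreal_neg)
    also have "ennreal (Dz \<omega> v) \<le> S \<omega>"
      unfolding S_def using vV by (rule SUP_upper)
    finally show "ennreal (sqrt (u \<bullet> ((transpose C ** C) *v u))) \<le> ennreal (?k * \<epsilon>) + ennreal ?k * S \<omega>"
      by (simp add: e1 add_left_mono mult_left_mono)
  qed
  have main: "\<exists>Sm. Sm \<in> borel_measurable M \<and> (\<forall>\<omega>. S \<omega> \<le> Sm \<omega>) \<and>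
      (\<integral>\<^sup>+\<omega>. Sm \<omega> \<partial>M) \<le> ennreal (2 / sqrt ?nn) * (\<integral>\<^sup>+\<omega>. R \<omega> \<partial>M)"
  proof (cases "V = {}")
    case True
    then have "S \<omega> = 0" for \<omega> by (simp add: S_def bot_ennreal)
    then show ?thesis by (intro exI[of _ "\<lambda>_. 0"]) simp
  next
    case False
    obtain V0 where V0: "countable V0" "V0 \<subseteq> V" "\<And>v. v \<in> V \<Longrightarrow> \<exists>x. (\<forall>m. x m \<in> V0) \<and> x \<longlonglongrightarrow> v"
      by (rule countable_dense_subset[of V]) blast
    have V0ne: "V0 \<noteq> {}" using False V0(3) by blast
    define e where "e = from_nat_into V0"
    have rng: "range e = V0" using V0ne V0(1) by (simp add: e_def)
    define Fk where "Fk k = insert 0 (e ` {..k})" for k :: nat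
    have Fk: "finite (Fk k)" "0 \<in> Fk k" "Fk k \<noteq> {}" for k by (auto simp: Fk_def)
    have Fmono: "k \<le> l \<Longrightarrow> Fk k \<subseteq> Fk l" for k l by (auto simp: Fk_def)
    define Mk where "Mk k \<omega> = ennreal (Max ((\<lambda>v. Dz \<omega> v) ` Fk k))" for k \<omega>
    define Sm where "Sm \<omega> = (SUP k. Mk k \<omega>)" for \<omega>
    have Mkm[measurable]: "Mk k \<in> borel_measurable M" for k
      unfolding Mk_def Dz_def
      by (intro measurable_compose[OF _ measurable_ennreal] borel_measurable_Max Fk(1)) measurable
    have inc: "incseq (\<lambda>k. Mk k)"
    proof (rule incseq_SucI, rule le_funI)
      fix k \<omega>
      show "Mk k \<omega> \<le> Mk (Suc k) \<omega>"
        unfolding Mk_def using Fk Fmono[of k "Suc k"]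
        by (intro ennreal_leI Max_mono image_mono) auto
    qed
    have Smm: "Sm \<in> borel_measurable M" unfolding Sm_def by measurable
    have SSm: "S \<omega> \<le> Sm \<omega>" for \<omega>
      unfolding S_def
    proof (rule SUP_least)
      fix v assume v: "v \<in> V"
      obtain x where x: "\<And>m. x m \<in> V0" "x \<longlonglongrightarrow> v" using V0(3)[OF v] by blast
      have lim: "(\<lambda>m. ennreal (Dz \<omega> (x m))) \<longlonglongrightarrow> ennreal (Dz \<omega> v)"
        unfolding Dz_def by (intro tendsto_ennrealI tendsto_intros x(2))
      have bnd: "ennreal (Dz \<omega> (x m)) \<le> Sm \<omega>" for m
      proof -
        obtain n where n: "x m = e n" using x(1)[of m] rng by blast
        have "e n \<in> Fk n" by (auto simp: Fk_def)
        then have "Dz \<omega> (x m) \<le> Max ((\<lambda>v. Dz \<omega> v) ` Fk n)"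
          using Fk(1)[of n] n by (intro Max_ge) auto
        then have "ennreal (Dz \<omega> (x m)) \<le> Mk n \<omega>" unfolding Mk_def by (rule ennreal_leI)
        also have "\<dots> \<le> Sm \<omega>" unfolding Sm_def by (rule SUP_upper) simp
        finally show ?thesis .
      qed
      show "ennreal (Dz \<omega> v) \<le> Sm \<omega>"
        by (rule LIMSEQ_le_const2[OF lim]) (use bnd in blast)
    qed
    have bound: "(\<integral>\<^sup>+\<omega>. Mk k \<omega> \<partial>M) \<le> ennreal (2 / sqrt ?nn) * (\<integral>\<^sup>+\<omega>. R \<omega> \<partial>M)" for k
    proof -
      have "(\<integral>\<^sup>+\<omega>. Mk k \<omega> \<partial>M) \<le> ennreal (2 / sqrt ?nn) *
          (\<integral>\<^sup>+\<omega>. ennreal (Max ((\<lambda>v. \<Sum>j\<in>UNIV. g \<omega> $ j * v$j) ` Fk k)) \<partial>M)"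
        unfolding Mk_def Dz_def
        by (rule key_finite[OF \<open>prob_space M\<close> B_indep B_normal g_indep g_normal Fk(1) Fk(2)])
      also have "\<dots> \<le> ennreal (2 / sqrt ?nn) * (\<integral>\<^sup>+\<omega>. R \<omega> \<partial>M)"
      proof (intro mult_left_mono nn_integral_mono)
        fix \<omega>
        have "Max ((\<lambda>v. \<Sum>j\<in>UNIV. g \<omega> $ j * v$j) ` Fk k) \<in> (\<lambda>v. \<Sum>j\<in>UNIV. g \<omega> $ j * v$j) ` Fk k"
          using Fk by (intro Max_in) auto
        then obtain v where v: "v \<in> Fk k" and mx: "Max ((\<lambda>v. \<Sum>j\<in>UNIV. g \<omega> $ j * v$j) ` Fk k) = (\<Sum>j\<in>UNIV. g \<omega> $ j * v$j)"
          by auto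
        show "ennreal (Max ((\<lambda>v. \<Sum>j\<in>UNIV. g \<omega> $ j * v$j) ` Fk k)) \<le> R \<omega>"
        proof (cases "v = 0")
          case True then show ?thesis by (simp add: mx)
        next
          case False
          then have "v \<in> V" using v V0(2) rng by (auto simp: Fk_def)
          then obtain u where u: "u \<in> T" "v = C *v u" by (auto simp: V_def)
          have "(\<Sum>j\<in>UNIV. g \<omega> $ j * v$j) = (transpose C *v g \<omega>) \<bullet> u"
            by (simp only: u(2) gdot)
          then have "ennreal (\<Sum>j\<in>UNIV. g \<omega> $ j * v$j) \<le> ennreal \<bar>(transpose C *v g \<omega>) \<bullet> u\<bar>"
            by (intro ennreal_leI) simp
          also have "\<dots> \<le> R \<omega>" unfolding R_def using u(1) by (rule SUP_upper)
          finally show ?thesis by (simp add: mx)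
        qed
      qed simp
      finally show ?thesis .
    qed
    have "(\<integral>\<^sup>+\<omega>. Sm \<omega> \<partial>M) = (SUP k. \<integral>\<^sup>+\<omega>. Mk k \<omega> \<partial>M)"
      unfolding Sm_def by (rule nn_integral_monotone_convergence_SUP[OF inc Mkm])
    also have "\<dots> \<le> ennreal (2 / sqrt ?nn) * (\<integral>\<^sup>+\<omega>. R \<omega> \<partial>M)"
      by (rule SUP_least) (rule bound)
    finally show ?thesis using Smm SSm by blast
  qed
  then obtain Sm where Sm: "Sm \<in> borel_measurable M" "\<And>\<omega>. S \<omega> \<le> Sm \<omega>"
    "(\<integral>\<^sup>+\<omega>. Sm \<omega> \<partial>M) \<le> ennreal (2 / sqrt ?nn) * (\<integral>\<^sup>+\<omega>. R \<omega> \<partial>M)" by blast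
  have "(\<integral>\<^sup>+ \<omega>. (\<Squnion>u\<in>{u \<in> T. l1norm ((B \<omega> ** C) *v u) / ?nn \<le> \<epsilon>}.
              ennreal (sqrt (u \<bullet> ((transpose C ** C) *v u)))) \<partial>M)
      \<le> (\<integral>\<^sup>+\<omega>. ennreal (?k * \<epsilon>) + ennreal ?k * Sm \<omega> \<partial>M)"
    by (rule nn_integral_mono) (rule order_trans[OF pw], intro add_left_mono mult_left_mono Sm(2), simp)
  also have "\<dots> = ennreal (?k * \<epsilon>) + ennreal ?k * (\<integral>\<^sup>+\<omega>. Sm \<omega> \<partial>M)"
    using Sm(1) by (simp add: nn_integral_add nn_integral_cmult emeasure_space_1)
  also have "\<dots> \<le> ennreal (?k * \<epsilon>) + ennreal ?k * (ennreal (2 / sqrt ?nn) * (\<integral>\<^sup>+\<omega>. R \<omega> \<partial>M))"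
    by (intro add_left_mono mult_left_mono Sm(3)) simp
  also have "\<dots> = ennreal (sqrt (2 * pi / ?nn)) * (\<integral>\<^sup>+\<omega>. R \<omega> \<partial>M) + ennreal (?k * \<epsilon>)"
  proof -
    have "?k * (2 / sqrt ?nn) = sqrt (2 * pi / ?nn)"
    proof (rule real_sqrt_unique[symmetric])
      show "(?k * (2 / sqrt ?nn))\<^sup>2 = 2 * pi / ?nn"
        by (simp add: power_mult_distrib power_divide)
      show "0 \<le> ?k * (2 / sqrt ?nn)" by simp
    qed
    then have "ennreal ?k * ennreal (2 / sqrt ?nn) = ennreal (sqrt (2 * pi / ?nn))"
      by (simp add: ennreal_mult[symmetric])
    then show ?thesis by (simp add: mult.assoc[symmetric] add.commute)
  qed
  finally show ?thesis by (simp add: R_def)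
qed


end
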